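(* Let $n\ge1$, with notation as in the context. Then for $0\le l\le k,k_1\le n-1$, $$\sum_{i=1}^n f_{kl}(\alpha_i)f_{k_1l}(\alpha_i)T_1(\alpha_i)\cdots T_l(\alpha_i)=\delta_{k,k_1}c_{kl},$$ and for $0\le l\le n-1$ and all $i,j\in\{l+1,\dots,n\}$, $$\sum_{k=l}^{n-1}\frac{1}{c_{kl}}f_{kl}(\alpha_i)f_{kl}(\alpha_j)T_1(\alpha_i)\cdots T_l(\alpha_i)=\delta_{ij}.$$
   Context: Principal embedding of $\mathfrak{sl}(2)$ in $\mathfrak{gl}(n)$: $Y=\sum_{i=1}^{n-1}E_{i+1,i}$, $H=\sum_{i=1}^n(n-2i+1)E_{ii}$, $X=\sum_{i=1}^{n-1}i(n-i)E_{i,i+1}$. $\alpha_i=n-2i+1$, $T_i(H)=\frac14(n^2-(H+2i-1)^2)$; for a polynomial $f$, $f(H)=\mathrm{diag}(f(\alpha_1),\dots,f(\alpha_n))$. For $0\le l\le k\le n-1$, $f_{kl}$ is the unique polynomial of degree $<n-l$ with $(\mathrm{ad}\,Y)^{k-l}(X^k)=X^lf_{kl}(H)$. Empty products of $T$'s equal $1$. $c_{kl}=\dfrac{(k-l)!\,(k!)^2}{(k+l)!\,(2k+1)}\,n(n^2-1^2)\cdots(n^2-k^2)$. *)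

theory Defs
  imports Complex_Main "HOL-Computational_Algebra.Polynomial"
begin

text \<open>n x n real matrices are represented as functions nat \<Rightarrow> nat \<Rightarrow> real,
  with rows/columns indexed by 1..n; all matrices built here vanish outside that range.\<close>

type_synonym rmat = "nat \<Rightarrow> nat \<Rightarrow> real"

definition mmul :: "nat \<Rightarrow> rmat \<Rightarrow> rmat \<Rightarrow> rmat" where
  "mmul n A B = (\<lambda>i j. \<Sum>m=1..n. A i m * B m j)"

definition midt :: "nat \<Rightarrow> rmat" where
  "midt n = (\<lambda>i j. if i = j \<and> 1 \<le> i \<and> i \<le> n then 1 else 0)"

fun mpow :: "nat \<Rightarrow> rmat \<Rightarrow> nat \<Rightarrow> rmat" where
  "mpow n A 0 = midt n"
| "mpow n A (Suc k) = mmul n A (mpow n A k)"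

definition meq :: "nat \<Rightarrow> rmat \<Rightarrow> rmat \<Rightarrow> bool" where
  "meq n A B \<longleftrightarrow> (\<forall>i\<in>{1..n}. \<forall>j\<in>{1..n}. A i j = B i j)"

definition Ymat :: "nat \<Rightarrow> rmat" where
  "Ymat n = (\<lambda>i j. if 1 \<le> j \<and> j \<le> n - 1 \<and> i = j + 1 then 1 else 0)"

definition Hmat :: "nat \<Rightarrow> rmat" where
  "Hmat n = (\<lambda>i j. if i = j \<and> 1 \<le> i \<and> i \<le> n then real n - 2 * real i + 1 else 0)"

definition Xmat :: "nat \<Rightarrow> rmat" where
  "Xmat n = (\<lambda>i j. if 1 \<le> i \<and> i \<le> n - 1 \<and> j = i + 1 then real i * (real n - real i) else 0)"

definition adY :: "nat \<Rightarrow> rmat \<Rightarrow> rmat" where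
  "adY n A = (\<lambda>i j. mmul n (Ymat n) A i j - mmul n A (Ymat n) i j)"

definition alpha :: "nat \<Rightarrow> nat \<Rightarrow> real" where
  "alpha n i = real n - 2 * real i + 1"

definition T :: "nat \<Rightarrow> nat \<Rightarrow> real \<Rightarrow> real" where
  "T n i x = ((real n)^2 - (x + 2 * real i - 1)^2) / 4"

text \<open>f(H) = diag(f(alpha_1),...,f(alpha_n)).\<close>
definition polyH :: "nat \<Rightarrow> real poly \<Rightarrow> rmat" where
  "polyH n f = (\<lambda>i j. if i = j \<and> 1 \<le> i \<and> i \<le> n then poly f (alpha n i) else 0)"

definition fkl :: "nat \<Rightarrow> nat \<Rightarrow> nat \<Rightarrow> real poly" where
  "fkl n k l = (THE f. degree f < n - l \<and>
      meq n (((adY n) ^^ (k - l)) (mpow n (Xmat n) k)) (mmul n (mpow n (Xmat n) l) (polyH n f)))"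

definition ckl :: "nat \<Rightarrow> nat \<Rightarrow> nat \<Rightarrow> real" where
  "ckl n k l = fact (k - l) * (fact k)^2 / (fact (k + l) * (2 * real k + 1))
      * real n * (\<Prod>m=1..k. (real n)^2 - (real m)^2)"

end

theory Submission
  imports Defs "Jordan_Normal_Form.Determinant"
begin


definition aa :: "nat \<Rightarrow> nat \<Rightarrow> real" where "aa n j = real j * (real n - real j)"
definition xs :: "nat \<Rightarrow> nat \<Rightarrow> nat \<Rightarrow> real" where "xs n l i = (\<Prod>j=i..<i+l. aa n j)"
definition cut :: "nat \<Rightarrow> nat \<Rightarrow> (nat\<Rightarrow>real) \<Rightarrow> nat \<Rightarrow> real" where
  "cut n l u i = (if 1 \<le> i \<and> i + l \<le> n then u i else 0)"
definition sd :: "nat \<Rightarrow> nat \<Rightarrow> (nat \<Rightarrow> real) \<Rightarrow> rmat" where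
  "sd n l u = (\<lambda>i j. if 1 \<le> i \<and> j = i + l \<and> j \<le> n then u i else 0)"
definition Yop :: "(nat\<Rightarrow>real) \<Rightarrow> nat \<Rightarrow> real" where "Yop u i = u (i-1) - u i"
definition Xop :: "nat \<Rightarrow> nat \<Rightarrow> (nat\<Rightarrow>real) \<Rightarrow> nat \<Rightarrow> real" where
  "Xop n l u i = aa n i * u (Suc i) - aa n (i+l) * u i"
fun vv :: "nat \<Rightarrow> nat \<Rightarrow> nat \<Rightarrow> nat \<Rightarrow> real" where
  "vv n k 0 = cut n k (xs n k)"
| "vv n k (Suc j) = Yop (vv n k j)"
definition ip :: "nat \<Rightarrow> nat \<Rightarrow> (nat\<Rightarrow>real) \<Rightarrow> (nat\<Rightarrow>real) \<Rightarrow> real" where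
  "ip n l u w = (\<Sum>i=1..n-l. u i * w i / xs n l i)"

lemma sum_single: "(\<Sum>m\<in>{1..(n::nat)}. (if m = t then g m else (0::real))) = (if t \<in> {1..n} then g t else 0)"
  by (subst sum.delta) auto

lemma xs_Suc: "xs n (Suc k) i = aa n i * xs n k (Suc i)"
  unfolding xs_def by (simp add: prod.atLeast_Suc_lessThan)

lemma xs_Suc': "xs n (Suc k) i = xs n k i * aa n (i + k)"
  unfolding xs_def by simp

lemma mpowX: "mpow n (Xmat n) k = sd n k (xs n k)"
proof (induction k)
  case 0
  show ?case by (auto simp: midt_def sd_def xs_def intro!: ext)
next
  case (Suc k)
  have "mmul n (Xmat n) (sd n k (xs n k)) i j = sd n (Suc k) (xs n (Suc k)) i j" for i j
  proof -
    have "mmul n (Xmat n) (sd n k (xs n k)) i j =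
      (\<Sum>m\<in>{1..n}. if m = i+1 then (if 1\<le>i \<and> i\<le>n-1 then aa n i * sd n k (xs n k) (i+1) j else 0) else 0)"
      unfolding mmul_def by (rule sum.cong) (auto simp: Xmat_def aa_def)
    also have "\<dots> = sd n (Suc k) (xs n (Suc k)) i j"
      by (subst sum_single) (auto simp: sd_def xs_Suc)
    finally show ?thesis .
  qed
  then show ?case using Suc by auto
qed

lemma adY_sd: assumes "l \<ge> 1" shows "adY n (sd n l u) = sd n (l-1) (Yop (cut n l u))"
proof (intro ext)
  fix i j
  have 1: "mmul n (Ymat n) (sd n l u) i j =
      (\<Sum>m\<in>{1..n}. if m = i-1 then (if 2\<le>i \<and> i\<le>n then sd n l u (i-1) j else 0) else 0)"
    unfolding mmul_def by (rule sum.cong) (auto simp: Ymat_def)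
  have 2: "mmul n (sd n l u) (Ymat n) i j =
      (\<Sum>m\<in>{1..n}. if m = j+1 then (if 1\<le>j \<and> j\<le>n-1 then sd n l u i (j+1) else 0) else 0)"
    unfolding mmul_def by (rule sum.cong) (auto simp: Ymat_def)
  show "adY n (sd n l u) i j = sd n (l-1) (Yop (cut n l u)) i j"
    unfolding adY_def 1 2 sum_single using assms
    by (auto simp: sd_def Yop_def cut_def)
qed

lemma sd_polyH: "mmul n (sd n l u) (polyH n f) = sd n l (\<lambda>i. u i * poly f (alpha n (i+l)))"
proof (intro ext)
  fix i j
  have "mmul n (sd n l u) (polyH n f) i j =
      (\<Sum>m\<in>{1..n}. if m = j then (if 1\<le>j \<and> j\<le>n then sd n l u i j * poly f (alpha n j) else 0) else 0)"
    unfolding mmul_def by (rule sum.cong) (auto simp: polyH_def)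
  then show "mmul n (sd n l u) (polyH n f) i j = sd n l (\<lambda>i. u i * poly f (alpha n (i+l))) i j"
    by (auto simp: sd_def)
qed

lemma sd_cut: "sd n l (cut n l u) = sd n l u"
  by (auto simp: sd_def cut_def intro!: ext)

definition supp :: "nat \<Rightarrow> nat \<Rightarrow> (nat \<Rightarrow> real) \<Rightarrow> bool" where
  "supp n l u \<longleftrightarrow> (\<forall>i. (i = 0 \<or> n < i + l) \<longrightarrow> u i = 0)"

lemma cut_supp: assumes "supp n l u" shows "cut n l u = u"
proof (rule ext)
  fix i show "cut n l u i = u i" using assms by (cases "i = 0") (auto simp: supp_def cut_def)
qed

lemma vv_supp: "j \<le> k \<Longrightarrow> supp n (k-j) (vv n k j)"
proof (induction j)
  case 0
  then show ?case by (auto simp: supp_def cut_def)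
next
  case (Suc j)
  then have "supp n (k-j) (vv n k j)" by simp
  then show ?case using Suc.prems
    by (auto simp: supp_def Yop_def)
qed

lemma adY_pow: "j \<le> k \<Longrightarrow> (adY n ^^ j) (mpow n (Xmat n) k) = sd n (k-j) (vv n k j)"
proof (induction j)
  case 0
  then show ?case by (simp add: mpowX sd_cut)
next
  case (Suc j)
  then have "(adY n ^^ Suc j) (mpow n (Xmat n) k) = adY n (sd n (k-j) (vv n k j))" by simp
  also have "\<dots> = sd n (k - Suc j) (vv n k (Suc j))"
    using Suc.prems cut_supp[OF vv_supp[of j k n]] by (subst adY_sd) auto
  finally show ?case .
qed


lemma aa_0[simp]: "aa n 0 = 0" and aa_n[simp]: "aa n n = 0" by (auto simp: aa_def)

lemma aa_nz: "1 \<le> j \<Longrightarrow> j < n \<Longrightarrow> aa n j \<noteq> 0"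
  by (auto simp: aa_def)

lemma xs_nz: "1 \<le> i \<Longrightarrow> i + l \<le> n \<Longrightarrow> xs n l i \<noteq> 0"
  unfolding xs_def by (auto simp: prod_zero_iff aa_nz)

lemma comm: assumes "u 0 = 0"
  shows "Xop n l (Yop u) i - Yop (Xop n (Suc l) u) i = 2 * real (Suc l) * u i"
proof (cases i)
  case 0
  then show ?thesis using assms by (simp add: Xop_def Yop_def)
next
  case (Suc i')
  then show ?thesis by (simp add: Xop_def Yop_def aa_def algebra_simps)
qed

lemma X_top: "Xop n k (vv n k 0) i = 0"
proof -
  consider "i = 0" | "1 \<le> i" "i + 1 + k \<le> n" | "1 \<le> i" "i + k = n" | "1 \<le> i" "i + k > n" by linarith
  then show ?thesis
  proof cases
    case 1 then show ?thesis by (simp add: Xop_def cut_def)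
  next
    case 2
    have "aa n i * xs n k (Suc i) = aa n (i+k) * xs n k i" using xs_Suc[of n k i] xs_Suc'[of n k i] by (metis mult.commute)
    then show ?thesis using 2 by (simp add: Xop_def cut_def)
  next
    case 3 then show ?thesis by (simp add: Xop_def cut_def)
  next
    case 4 then show ?thesis by (simp add: Xop_def cut_def)
  qed
qed

lemma Yop_scale: "Yop (\<lambda>i. c * w i) = (\<lambda>i. c * Yop w i)"
  by (auto simp: Yop_def algebra_simps intro!: ext)

lemma Xvv: "j \<le> k \<Longrightarrow> Xop n (k-j) (vv n k j) = (\<lambda>i. real j * (2*real k - real j + 1) * vv n k (j-1) i)"
proof (induction j)
  case 0
  then show ?case using X_top[of n k] by (auto intro!: ext)
next
  case (Suc j)
  then have IH: "Xop n (k-j) (vv n k j) = (\<lambda>i. real j * (2*real k - real j + 1) * vv n k (j-1) i)" by simp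
  have s: "supp n (k-j) (vv n k j)" using Suc.prems vv_supp[of j k n] by simp
  have kj: "k - j = Suc (k - Suc j)" using Suc.prems by simp
  have Y1: "Yop (vv n k (j-1)) = vv n k j" if "j \<ge> 1" using that by (cases j) auto
  show ?case
  proof (rule ext)
    fix i
    have "Xop n (k - Suc j) (vv n k (Suc j)) i = Xop n (k - Suc j) (Yop (vv n k j)) i" by simp
    also have "\<dots> = Yop (Xop n (Suc (k - Suc j)) (vv n k j)) i + 2 * real (Suc (k - Suc j)) * vv n k j i"
      using comm[of "vv n k j" n "k - Suc j" i] s by (simp add: supp_def)
    also have "\<dots> = Yop (\<lambda>i. real j * (2*real k - real j + 1) * vv n k (j-1) i) i + 2 * real (k - j) * vv n k j i"
      using IH kj by simp
    also have "\<dots> = real j * (2*real k - real j + 1) * Yop (vv n k (j-1)) i + 2 * real (k - j) * vv n k j i"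
      by (simp add: Yop_scale)
    also have "\<dots> = real j * (2*real k - real j + 1) * vv n k j i + 2 * real (k - j) * vv n k j i"
      using Y1 by (cases "j = 0") auto
    also have "\<dots> = real (Suc j) * (2 * real k - real (Suc j) + 1) * vv n k (Suc j - 1) i"
      using Suc.prems by (simp add: of_nat_diff algebra_simps)
    finally show "Xop n (k - Suc j) (vv n k (Suc j)) i = real (Suc j) * (2 * real k - real (Suc j) + 1) * vv n k (Suc j - 1) i" .
  qed
qed

lemma adjoint:
  assumes "Suc l \<le> n" "supp n (Suc l) u"
  shows "ip n l (Yop u) w = ip n (Suc l) u (Xop n l w)"
proof -
  define N where "N = n - Suc l"
  have nl: "n - l = Suc N" using assms N_def by simp
  have u0: "u 0 = 0" and uN: "u (Suc N) = 0" using assms(2) nl by (auto simp: supp_def)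
  have "ip n l (Yop u) w = (\<Sum>i=1..Suc N. u (i-1) * w i / xs n l i) - (\<Sum>i=1..Suc N. u i * w i / xs n l i)"
    unfolding ip_def nl Yop_def by (simp add: sum_subtractf left_diff_distrib diff_divide_distrib)
  also have "(\<Sum>i=1..Suc N. u (i-1) * w i / xs n l i) = (\<Sum>i=1..N. u i * w (Suc i) / xs n l (Suc i))"
  proof -
    have "(\<Sum>i=1..Suc N. u (i-1) * w i / xs n l i) = u (1-1) * w 1 / xs n l 1 + (\<Sum>i=Suc 1..Suc N. u (i-1) * w i / xs n l i)"
      by (rule sum.atLeast_Suc_atMost) simp
    also have "(\<Sum>i=Suc 1..Suc N. u (i-1) * w i / xs n l i) = (\<Sum>i=1..N. u (Suc i - 1) * w (Suc i) / xs n l (Suc i))"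
      by (rule sum.shift_bounds_cl_Suc_ivl)
    finally show ?thesis by (simp add: u0)
  qed
  also have "(\<Sum>i=1..Suc N. u i * w i / xs n l i) = (\<Sum>i=1..N. u i * w i / xs n l i)"
    by (simp add: uN)
  also have "(\<Sum>i=1..N. u i * w (Suc i) / xs n l (Suc i)) - (\<Sum>i=1..N. u i * w i / xs n l i)
      = (\<Sum>i=1..N. u i * Xop n l w i / xs n (Suc l) i)"
    unfolding sum_subtractf[symmetric]
  proof (rule sum.cong)
    fix i assume i: "i \<in> {1..N}"
    have a1: "xs n (Suc l) i = aa n i * xs n l (Suc i)" by (rule xs_Suc)
    have a2: "xs n (Suc l) i = xs n l i * aa n (i + l)" by (rule xs_Suc')
    have nz1: "xs n l (Suc i) \<noteq> 0" using i N_def assms by (intro xs_nz) auto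
    have nz2: "xs n l i \<noteq> 0" using i N_def assms by (intro xs_nz) auto
    have nz3: "xs n (Suc l) i \<noteq> 0" using i N_def assms by (intro xs_nz) auto
    have "u i * Xop n l w i / xs n (Suc l) i
        = u i * (aa n i * w (Suc i)) / xs n (Suc l) i - u i * (aa n (i+l) * w i) / xs n (Suc l) i"
      by (simp add: Xop_def algebra_simps diff_divide_distrib)
    also have "\<dots> = u i * w (Suc i) / xs n l (Suc i) - u i * w i / xs n l i"
      using nz1 nz2 nz3 a1 a2 by (simp add: field_simps)
    finally show "u i * w (Suc i) / xs n l (Suc i) - u i * w i / xs n l i = u i * Xop n l w i / xs n (Suc l) i" by simp
  qed simp
  also have "\<dots> = ip n (Suc l) u (Xop n l w)" unfolding ip_def N_def by simp
  finally show ?thesis .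
qed


lemma ip_scale: "ip n l u (\<lambda>i. c * w i) = c * ip n l u w"
  unfolding ip_def by (simp add: sum_distrib_left algebra_simps)

lemma ip_sym: "ip n l u w = ip n l w u"
  unfolding ip_def by (simp add: algebra_simps)

lemma Gram:
  assumes "k \<le> n - 1" "n \<ge> 1" "l \<le> k1" "k1 \<le> k"
  shows "ip n l (vv n k (k-l)) (vv n k1 (k1-l)) =
    (if k1 = k then (\<Prod>m=l..<k. real (k-m) * real (k+m+1)) * (\<Sum>i=1..n-k. xs n k i) else 0)"
  using assms
proof (induction "k - l" arbitrary: l)
  case 0
  then have lk: "l = k" "k1 = k" by auto
  have "ip n k (vv n k 0) (vv n k 0) = (\<Sum>i=1..n-k. xs n k i)"
    unfolding ip_def
  proof (rule sum.cong)
    fix i assume "i \<in> {1..n-k}"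
    then have ik: "1 \<le> i" "i + k \<le> n" using 0 by auto
    then have "cut n k (xs n k) i = xs n k i" "xs n k i \<noteq> 0" using xs_nz[of i k n] by (auto simp: cut_def)
    then show "vv n k 0 i * vv n k 0 i / xs n k i = xs n k i" by simp
  qed simp
  then show ?case using lk by simp
next
  case (Suc d)
  then have lk: "l < k" by simp
  have vk: "vv n k (k-l) = Yop (vv n k (k - Suc l))"
    using lk by (metis Suc_diff_Suc vv.simps(2))
  have s: "supp n (Suc l) (vv n k (k - Suc l))" using vv_supp[of "k - Suc l" k n] lk by simp
  have "ip n l (vv n k (k-l)) (vv n k1 (k1-l)) = ip n (Suc l) (vv n k (k - Suc l)) (Xop n l (vv n k1 (k1-l)))"
    unfolding vk using Suc.prems lk s by (intro adjoint) auto
  also have "Xop n l (vv n k1 (k1-l)) = (\<lambda>i. real (k1-l) * (2*real k1 - real (k1-l) + 1) * vv n k1 (k1-l-1) i)"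
    using Xvv[of "k1-l" k1 n] Suc.prems by simp
  finally have e: "ip n l (vv n k (k-l)) (vv n k1 (k1-l)) = real (k1-l) * (2*real k1 - real (k1-l) + 1) * ip n (Suc l) (vv n k (k - Suc l)) (vv n k1 (k1 - Suc l))"
    by (simp add: ip_scale)
  show ?case
  proof (cases "k1 = l")
    case True
    then show ?thesis using e lk by simp
  next
    case False
    then have IH: "ip n (Suc l) (vv n k (k - Suc l)) (vv n k1 (k1 - Suc l)) =
      (if k1 = k then (\<Prod>m=Suc l..<k. real (k-m) * real (k+m+1)) * (\<Sum>i=1..n-k. xs n k i) else 0)"
      using Suc by (intro Suc.hyps) auto
    define P' where "P' = (\<Prod>m=Suc l..<k. real (k-m) * real (k+m+1))"
    define S where "S = (\<Sum>i=1..n-k. xs n k i)"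
    have p: "(\<Prod>m=l..<k. real (k-m) * real (k+m+1)) = real (k-l) * real (k+l+1) * P'"
      using lk unfolding P'_def by (simp add: prod.atLeast_Suc_lessThan)
    have c: "real (k1-l) * (2*real k1 - real (k1-l) + 1) = real (k1-l) * real (k1+l+1)"
      using Suc.prems by (simp add: of_nat_diff)
    show ?thesis
    proof (cases "k1 = k")
      case True
      have "ip n l (vv n k (k-l)) (vv n k1 (k1-l)) = real (k1-l) * real (k1+l+1) * (P' * S)"
        using e IH True c unfolding P'_def S_def by simp
      then show ?thesis using p True unfolding S_def by simp
    next
      case False
      then show ?thesis using e IH by simp
    qed
  qed
qed




lemma vander: "(\<Sum>i=1..N. ((i+k-1) choose k) * ((N-i) choose b)) = (N+k) choose (k+b+1)"
proof (induction N arbitrary: b)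
  case 0
  then show ?case by simp
next
  case (Suc N)
  show ?case
  proof (cases b)
    case 0
    have "(\<Sum>i=1..Suc N. ((i+k-1) choose k) * ((Suc N-i) choose b)) = (\<Sum>i=1..N. ((i+k-1) choose k)) + ((N+k) choose k)"
      using 0 by simp
    also have "(\<Sum>i=1..N. ((i+k-1) choose k)) = (N+k) choose (k+1)" using Suc.IH[of 0] by simp
    finally show ?thesis using 0 by simp
  next
    case (Suc b')
    have "(\<Sum>i=1..Suc N. ((i+k-1) choose k) * ((Suc N-i) choose b)) = (\<Sum>i=1..N. ((i+k-1) choose k) * ((Suc N-i) choose b))"
      using Suc by simp
    also have "\<dots> = (\<Sum>i=1..N. ((i+k-1) choose k) * ((N-i) choose b') + ((i+k-1) choose k) * ((N-i) choose b))"
      by (rule sum.cong) (auto simp: Suc Suc_diff_le algebra_simps)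
    also have "\<dots> = ((N+k) choose (k+b'+1)) + ((N+k) choose (k+b+1))"
      using Suc.IH[of b'] Suc.IH[of b] by (simp add: sum.distrib)
    also have "\<dots> = (Suc N + k) choose (k + b + 1)" using Suc by simp
    finally show ?thesis .
  qed
qed

lemma prod_up: "1 \<le> i \<Longrightarrow> (\<Prod>j=i..<i+k. real j) = fact k * real ((i+k-1) choose k)"
proof (induction k)
  case 0 then show ?case by simp
next
  case (Suc k)
  define t where "t = i + k - 1"
  have t: "i + k = Suc t" using Suc.prems unfolding t_def by simp
  have e: "real (Suc k) * real ((i + k) choose Suc k) = real (i+k) * real ((i+k-1) choose k)"
    using Suc_times_binomial[of k t] unfolding t by (simp only: of_nat_mult[symmetric] diff_Suc_1)
  have "(\<Prod>j=i..<i+Suc k. real j) = (\<Prod>j=i..<i+k. real j) * real (i+k)" by simp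
  also have "\<dots> = fact k * (real (i+k) * real ((i+k-1) choose k))" using Suc by simp
  also have "\<dots> = fact (Suc k) * real ((i + Suc k - 1) choose Suc k)" 
    unfolding e[symmetric] by simp
  finally show ?case .
qed

lemma prod_down: "i + k \<le> n \<Longrightarrow> (\<Prod>j=i..<i+k. real n - real j) = fact k * real ((n-i) choose k)"
proof (induction k arbitrary: i)
  case 0 then show ?case by simp
next
  case (Suc k)
  define t where "t = n - i - 1"
  have t: "n - i = Suc t" using Suc.prems unfolding t_def by simp
  have e: "real (Suc k) * real ((n-i) choose Suc k) = real (n-i) * real ((n-i-1) choose k)"
    using Suc_times_binomial[of k t] unfolding t by (simp only: of_nat_mult[symmetric] diff_Suc_1)
  have "(\<Prod>j=i..<i+Suc k. real n - real j) = (real n - real i) * (\<Prod>j=Suc i..<Suc i+k. real n - real j)"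
    by (simp add: prod.atLeast_Suc_lessThan)
  also have "(\<Prod>j=Suc i..<Suc i+k. real n - real j) = fact k * real ((n - Suc i) choose k)"
    by (rule Suc.IH) (use Suc.prems in simp)
  also have "n - Suc i = n - i - 1" by simp
  also have "real n - real i = real (n - i)" using Suc.prems by (simp add: of_nat_diff)
  also have "real (n - i) * (fact k * real ((n - i - 1) choose k)) = fact k * (real (n-i) * real ((n-i-1) choose k))" by simp
  also have "\<dots> = fact (Suc k) * real ((n-i) choose Suc k)"
    unfolding e[symmetric] by simp
  finally show ?case .
qed

lemma fact_ratio: "k + 1 \<le> n \<Longrightarrow> (fact (n+k) :: real) = fact (n-k-1) * real n * (\<Prod>m=1..k. (real n)^2 - (real m)^2)"
proof (induction k)
  case 0
  then show ?case by (cases n) auto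
next
  case (Suc k)
  then have IH: "(fact (n+k) :: real) = fact (n-k-1) * real n * (\<Prod>m=1..k. (real n)^2 - (real m)^2)" by simp
  have nk: "n - k - 1 = Suc (n - Suc k - 1)" using Suc.prems by simp
  have f1: "(fact (n - k - 1) :: real) = real (n-k-1) * fact (n - Suc k - 1)"
    unfolding nk by (simp only: fact_Suc of_nat_mult of_nat_fact)
  have "(fact (n + Suc k) :: real) = real (n+k+1) * fact (n+k)" by simp
  also have "\<dots> = fact (n - Suc k - 1) * real n * ((\<Prod>m=1..k. (real n)^2 - (real m)^2) * (real (n+k+1) * real (n-k-1)))"
    unfolding IH f1 by (simp add: algebra_simps)
  also have "real (n+k+1) * real (n-k-1) = (real n)^2 - (real (Suc k))^2"
    using Suc.prems by (simp add: of_nat_diff power2_eq_square algebra_simps)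
  finally show ?case by simp
qed

lemma prod_fact: "l \<le> k \<Longrightarrow> (\<Prod>m=l..<k. real (k-m) * real (k+m+1)) * fact (k+l) = fact (k-l) * fact (2*k)"
proof (induction "k - l" arbitrary: l)
  case 0 then show ?case by (simp add: mult_2)
next
  case (Suc d)
  then have lk: "l < k" by simp
  have IH: "(\<Prod>m=Suc l..<k. real (k-m) * real (k+m+1)) * fact (k+Suc l) = fact (k-Suc l) * fact (2*k)"
    using Suc by (intro Suc.hyps) auto
  have f: "(fact (k - l) :: real) = real (k-l) * fact (k - Suc l)"
    using lk by (metis Suc_diff_Suc fact_Suc of_nat_fact of_nat_mult)
  have "(\<Prod>m=l..<k. real (k-m) * real (k+m+1)) * fact (k+l)
     = real (k-l) * ((\<Prod>m=Suc l..<k. real (k-m) * real (k+m+1)) * (real (k+l+1) * fact (k+l)))"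
    using lk by (simp add: prod.atLeast_Suc_lessThan algebra_simps)
  also have "real (k+l+1) * fact (k+l) = (fact (k + Suc l) :: real)" by simp
  finally show ?case using IH f by simp
qed




lemma dual:
  fixes F :: "nat \<Rightarrow> nat \<Rightarrow> real" and w c :: "nat \<Rightarrow> real"
  assumes c: "\<forall>k<N. c k \<noteq> 0" and w: "\<forall>i<N. w i \<noteq> 0"
    and orth: "\<forall>k<N. \<forall>k1<N. (\<Sum>i<N. F k i * F k1 i * w i) = (if k = k1 then c k else 0)"
  shows "\<forall>i<N. \<forall>j<N. (\<Sum>k<N. (1 / c k) * F k i * F k j * w i) = (if i = j then 1 else 0)"
proof -
  define A where "A = mat N N (\<lambda>(k,i). F k i * w i / c k)"
  define B where "B = mat N N (\<lambda>(i,k1). F k1 i)"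
  have Ac: "A \<in> carrier_mat N N" and Bc: "B \<in> carrier_mat N N" by (auto simp: A_def B_def)
  have AB: "A * B = 1\<^sub>m N"
  proof (rule eq_matI)
    fix k k1 assume k: "k < dim_row (1\<^sub>m N)" and k1: "k1 < dim_col (1\<^sub>m N)"
    have "(A * B) $$ (k, k1) = (\<Sum>t<N. F k t * w t / c k * F k1 t)"
      using k k1 by (simp add: A_def B_def scalar_prod_def atLeast0LessThan)
    also have "\<dots> = (1 / c k) * (\<Sum>t<N. F k t * F k1 t * w t)"
      by (simp add: sum_distrib_left algebra_simps)
    also have "\<dots> = 1\<^sub>m N $$ (k, k1)" using orth c k k1 by auto
    finally show "(A * B) $$ (k, k1) = 1\<^sub>m N $$ (k, k1)" .
  qed (auto simp: A_def B_def)
  have BA: "B * A = 1\<^sub>m N" by (rule mat_mult_left_right_inverse[OF Ac Bc AB])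
  have key: "(\<Sum>t<N. F t i * F t j / c t) * w j = (if i = j then 1 else 0)" if "i < N" "j < N" for i j
  proof -
    have "(B * A) $$ (i, j) = (\<Sum>t<N. F t i * (F t j * w j / c t))"
      using that by (simp add: A_def B_def scalar_prod_def atLeast0LessThan)
    also have "\<dots> = (\<Sum>t<N. F t i * F t j / c t) * w j"
      unfolding sum_distrib_right by (intro sum.cong) (simp_all add: times_divide_eq_right times_divide_eq_left mult_ac)
    finally show ?thesis using BA that by simp
  qed
  show ?thesis
  proof (intro allI impI)
    fix i j assume ij: "i < N" "j < N"
    have e: "(\<Sum>k<N. (1 / c k) * F k i * F k j * w i) = (\<Sum>t<N. F t i * F t j / c t) * w i"
      unfolding sum_distrib_right by (intro sum.cong) (simp_all add: times_divide_eq_right times_divide_eq_left mult_ac)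
    show "(\<Sum>k<N. (1 / c k) * F k i * F k j * w i) = (if i = j then 1 else 0)"
    proof (cases "i = j")
      case True then show ?thesis using e key[OF ij] by simp
    next
      case False
      then have "(\<Sum>t<N. F t i * F t j / c t) = 0" using key[OF ij] w ij by auto
      then show ?thesis using e False by simp
    qed
  qed
qed




lemma lagrange:
  fixes p :: "nat \<Rightarrow> real"
  assumes inj: "inj_on p {1..N}" and N: "N \<ge> 1"
  shows "\<exists>f. degree f < N \<and> (\<forall>i\<in>{1..N}. poly f (p i) = y i)"
proof -
  define D where "D i = (\<Prod>j\<in>{1..N}-{i}. p i - p j)" for i
  define L where "L i = (\<Prod>j\<in>{1..N}-{i}. [:- p j, 1:])" for i
  define f where "f = (\<Sum>i\<in>{1..N}. Polynomial.smult (y i / D i) (L i))"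
  have degL: "degree (L i) \<le> N - 1" if "i \<in> {1..N}" for i
  proof -
    have "degree (L i) \<le> sum (degree \<circ> (\<lambda>j. [:- p j, 1:])) ({1..N}-{i})"
      unfolding L_def by (rule degree_prod_sum_le) simp
    also have "\<dots> = card ({1..N}-{i})" by simp
    also have "\<dots> = N - 1" using that by simp
    finally show ?thesis .
  qed
  have "degree f \<le> N - 1"
    unfolding f_def
  proof (rule degree_sum_le)
    fix i assume i: "i \<in> {1..N}"
    show "degree (Polynomial.smult (y i / D i) (L i)) \<le> N - 1"
      using degree_smult_le[of "y i / D i" "L i"] degL[OF i] by linarith
  qed simp
  then have df: "degree f < N" using N by simp
  have "poly f (p m) = y m" if m: "m \<in> {1..N}" for m
  proof -
    have "poly f (p m) = (\<Sum>i\<in>{1..N}. y i / D i * (\<Prod>j\<in>{1..N}-{i}. p m - p j))"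
      unfolding f_def L_def by (simp add: poly_sum poly_prod)
    also have "\<dots> = (\<Sum>i\<in>{1..N}. if i = m then y m else 0)"
    proof (rule sum.cong)
      fix i assume i: "i \<in> {1..N}"
      show "y i / D i * (\<Prod>j\<in>{1..N}-{i}. p m - p j) = (if i = m then y m else 0)"
      proof (cases "i = m")
        case True
        have "D m \<noteq> 0" unfolding D_def using inj m
          by (subst prod_zero_iff) (auto dest: inj_onD)
        then show ?thesis using True unfolding D_def by simp
      next
        case False
        have "(\<Prod>j\<in>{1..N}-{i}. p m - p j) = 0"
          using False m by (subst prod_zero_iff) auto
        then show ?thesis using False by simp
      qed
    qed simp
    also have "\<dots> = y m" using m by (subst sum.delta) auto
    finally show ?thesis .
  qed
  then show ?thesis using df by blast
qed

lemma meq_sd: "meq n (sd n l u) (sd n l v) \<longleftrightarrow> (\<forall>i. 1 \<le> i \<and> i + l \<le> n \<longrightarrow> u i = v i)"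
proof
  assume h: "meq n (sd n l u) (sd n l v)"
  show "\<forall>i. 1 \<le> i \<and> i + l \<le> n \<longrightarrow> u i = v i"
  proof (intro allI impI)
    fix i assume i: "1 \<le> i \<and> i + l \<le> n"
    then have "sd n l u i (i+l) = sd n l v i (i+l)" using h unfolding meq_def by auto
    then show "u i = v i" using i by (simp add: sd_def)
  qed
next
  assume "\<forall>i. 1 \<le> i \<and> i + l \<le> n \<longrightarrow> u i = v i"
  then show "meq n (sd n l u) (sd n l v)" unfolding meq_def sd_def by auto
qed

lemma alpha_inj: "inj_on (\<lambda>i. alpha n (i + l)) A"
  by (auto simp: inj_on_def alpha_def)

lemma fkl_prop:
  assumes "n \<ge> 1" "l \<le> k" "k \<le> n - 1"
  shows "degree (fkl n k l) < n - l \<and> (\<forall>i. 1 \<le> i \<and> i + l \<le> n \<longrightarrow> xs n l i * poly (fkl n k l) (alpha n (i+l)) = vv n k (k-l) i)"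
proof -
  define Q where "Q f \<longleftrightarrow> degree f < n - l \<and> (\<forall>i. 1 \<le> i \<and> i + l \<le> n \<longrightarrow> xs n l i * poly f (alpha n (i+l)) = vv n k (k-l) i)" for f
  have eq: "(degree f < n - l \<and> meq n (((adY n) ^^ (k - l)) (mpow n (Xmat n) k)) (mmul n (mpow n (Xmat n) l) (polyH n f))) \<longleftrightarrow> Q f" for f
  proof -
    have "((adY n) ^^ (k - l)) (mpow n (Xmat n) k) = sd n l (vv n k (k-l))"
      using adY_pow[of "k-l" k n] assms by simp
    moreover have "mmul n (mpow n (Xmat n) l) (polyH n f) = sd n l (\<lambda>i. xs n l i * poly f (alpha n (i+l)))"
      by (simp add: mpowX sd_polyH)
    ultimately show ?thesis unfolding Q_def by (auto simp: meq_sd)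
  qed
  have ex: "\<exists>f. Q f"
  proof -
    have nl: "1 \<le> n - l" using assms by linarith
    obtain f where f: "degree f < n - l" "\<forall>i\<in>{1..n-l}. poly f (alpha n (i+l)) = vv n k (k-l) i / xs n l i"
      using lagrange[of "\<lambda>i. alpha n (i+l)" "n-l" "\<lambda>i. vv n k (k-l) i / xs n l i", OF alpha_inj nl] by blast
    have "Q f" unfolding Q_def
    proof (intro conjI allI impI)
      fix i assume i: "1 \<le> i \<and> i + l \<le> n"
      then have "xs n l i \<noteq> 0" using xs_nz by auto
      then show "xs n l i * poly f (alpha n (i+l)) = vv n k (k-l) i" using f i by auto
    qed (use f in auto)
    then show ?thesis by blast
  qed
  have un: "f = g" if "Q f" "Q g" for f g
  proof (rule poly_eqI_degree[where A = "(\<lambda>i. alpha n (i+l)) ` {1..n-l}"])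
    fix x assume "x \<in> (\<lambda>i. alpha n (i+l)) ` {1..n-l}"
    then obtain i where i: "i \<in> {1..n-l}" "x = alpha n (i+l)" by auto
    then have il: "1 \<le> i" "i + l \<le> n" by auto
    then have nz: "xs n l i \<noteq> 0" using xs_nz by auto
    have "xs n l i * poly f x = xs n l i * poly g x" using that i(2) il unfolding Q_def by auto
    then show "poly f x = poly g x" using nz by simp
  next
    have c: "card ((\<lambda>i. alpha n (i+l)) ` {1..n-l}) = n - l"
      by (subst card_image) (auto simp: alpha_inj)
    show "degree f < card ((\<lambda>i. alpha n (i+l)) ` {1..n-l})" using that c unfolding Q_def by simp
    show "degree g < card ((\<lambda>i. alpha n (i+l)) ` {1..n-l})" using that c unfolding Q_def by simp
  qed
  have "\<exists>!f. Q f" using ex un by blast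
  then have "Q (THE f. Q f)" by (rule theI')
  moreover have "fkl n k l = (THE f. Q f)" unfolding fkl_def eq ..
  ultimately show ?thesis unfolding Q_def by simp
qed




lemma sumxs: assumes "k \<le> n" shows "(\<Sum>i=1..n-k. xs n k i) = (fact k)^2 * real ((n+k) choose (2*k+1))"
proof -
  have "(\<Sum>i=1..n-k. xs n k i) = (\<Sum>i=1..n-k. (fact k)^2 * real (((i+k-1) choose k) * ((n-i) choose k)))"
  proof (rule sum.cong)
    fix i assume i: "i \<in> {1..n-k}"
    have "xs n k i = (\<Prod>j=i..<i+k. real j) * (\<Prod>j=i..<i+k. real n - real j)"
      unfolding xs_def aa_def by (simp add: prod.distrib)
    also have "\<dots> = (fact k * real ((i+k-1) choose k)) * (fact k * real ((n-i) choose k))"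
    proof -
      have ik: "1 \<le> i" "i + k \<le> n" using i assms by auto
      show ?thesis by (simp only: prod_up[OF ik(1)] prod_down[OF ik(2)])
    qed
    finally show "xs n k i = (fact k)^2 * real (((i+k-1) choose k) * ((n-i) choose k))"
      by (simp add: power2_eq_square)
  qed simp
  also have "\<dots> = (fact k)^2 * real (\<Sum>i=1..n-k. ((i+k-1) choose k) * ((n-i) choose k))"
    by (simp add: sum_distrib_left)
  also have "(\<Sum>i=1..n-k. ((i+k-1) choose k) * ((n-i) choose k)) = (\<Sum>i=1..n. ((i+k-1) choose k) * ((n-i) choose k))"
    by (rule sum.mono_neutral_left) auto
  also have "\<dots> = (n+k) choose (2*k+1)" using vander[where N=n and k=k and b=k] by (simp add: mult_2)
  finally show ?thesis .
qed

lemma ckl_eq: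
  assumes "k \<le> n - 1" "n \<ge> 1" "l \<le> k"
  shows "(\<Prod>m=l..<k. real (k-m) * real (k+m+1)) * (\<Sum>i=1..n-k. xs n k i) = ckl n k l"
proof -
  define C where "C = real ((n+k) choose (2*k+1))"
  have kn: "k + 1 \<le> n" using assms by linarith
  have b2: "n + k - (2*k+1) = n - k - 1" by simp
  have bl: "fact (2*k+1) * fact (n+k - (2*k+1)) * ((n+k) choose (2*k+1)) = fact (n+k)"
    using kn by (intro binomial_fact_lemma) simp
  then have "real (fact (2*k+1) * fact (n-k-1) * ((n+k) choose (2*k+1))) = real (fact (n+k))"
    using b2 by simp
  then have "C * fact (2*k+1) * fact (n-k-1) = fact (n+k)"
    unfolding C_def of_nat_mult of_nat_fact by (simp add: mult_ac)
  also have "\<dots> = (real n * (\<Prod>m=1..k. (real n)^2 - (real m)^2)) * fact (n-k-1)"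
    using fact_ratio[OF kn] by (simp add: mult_ac)
  finally have fr: "real n * (\<Prod>m=1..k. (real n)^2 - (real m)^2) = C * fact (2*k+1)"
    by simp
  have pf: "(\<Prod>m=l..<k. real (k-m) * real (k+m+1)) = fact (k-l) * fact (2*k) / fact (k+l)"
    using prod_fact[OF assms(3)] by (simp add: field_simps)
  have f2: "(fact (2*k+1) :: real) = (2 * real k + 1) * fact (2*k)" by simp
  have s: "(\<Sum>i=1..n-k. xs n k i) = (fact k)^2 * C" using sumxs[of k n] kn unfolding C_def by simp
  have "ckl n k l = fact (k-l) * (fact k)^2 / (fact (k+l) * (2 * real k + 1)) * (real n * (\<Prod>m=1..k. (real n)^2 - (real m)^2))"
    unfolding ckl_def by (simp add: mult.assoc)
  also have "\<dots> = fact (k-l) * (fact k)^2 / (fact (k+l) * (2 * real k + 1)) * (C * ((2 * real k + 1) * fact (2*k)))"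
    unfolding fr f2 ..
  also have "\<dots> = fact (k-l) * fact (2*k) / fact (k+l) * ((fact k)^2 * C)"
  proof -
    have a: "(2 * real k + 1) \<noteq> 0" by (simp add: add_nonneg_eq_0_iff)
    have b: "(fact (k+l) :: real) \<noteq> 0" by simp
    show ?thesis using a b by (simp add: divide_simps)
  qed
  finally show ?thesis unfolding pf s by simp
qed

lemma T_alpha: "T n m (alpha n i) = (real i - real m) * (real n - real i + real m)"
  unfolding T_def alpha_def by (simp add: power2_eq_square field_simps)

lemma wT: "i > l \<Longrightarrow> (\<Prod>m=1..l. T n m (alpha n i)) = xs n l (i - l)"
proof (induction l)
  case 0 then show ?case by (simp add: xs_def)
next
  case (Suc l)
  then have IH: "(\<Prod>m=1..l. T n m (alpha n i)) = xs n l (i - l)" by simp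
  have "(\<Prod>m=1..Suc l. T n m (alpha n i)) = xs n l (i - l) * T n (Suc l) (alpha n i)"
    using IH by simp
  also have "T n (Suc l) (alpha n i) = aa n (i - Suc l)"
    using Suc.prems by (simp add: T_alpha aa_def of_nat_diff)
  also have "xs n l (i - l) * aa n (i - Suc l) = xs n (Suc l) (i - Suc l)"
    using Suc.prems xs_Suc[of n l "i - Suc l"] by (simp add: Suc_diff_Suc)
  finally show ?case .
qed

lemma wT0: "1 \<le> i \<Longrightarrow> i \<le> l \<Longrightarrow> (\<Prod>m=1..l. T n m (alpha n i)) = 0"
  by (subst prod_zero_iff) (auto intro!: bexI[of _ i] simp: T_alpha)

lemma shift_sum:
  fixes h :: "nat \<Rightarrow> real"
  assumes "\<forall>i. 1 \<le> i \<and> i \<le> l \<longrightarrow> h i = 0"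
  shows "(\<Sum>i=1..n. h i) = (\<Sum>b=1..n-l. h (b + l))"
proof -
  have "(\<Sum>i=1..n. h i) = (\<Sum>i=l+1..n. h i)"
    using assms by (intro sum.mono_neutral_right) auto
  also have "\<dots> = (\<Sum>b=1..n-l. h (b + l))"
  proof (cases "l \<le> n")
    case True
    then have "{l+1..n} = {1+l..(n-l)+l}" by simp
    then show ?thesis by (simp only: sum.shift_bounds_cl_nat_ivl)
  next
    case False then show ?thesis by simp
  qed
  finally show ?thesis .
qed

lemma part1:
  assumes n: "n \<ge> 1" and h: "l \<le> k" "l \<le> k1" "k \<le> n - 1" "k1 \<le> n - 1"
  shows "(\<Sum>i=1..n. poly (fkl n k l) (alpha n i) * poly (fkl n k1 l) (alpha n i)
              * (\<Prod>m=1..l. T n m (alpha n i))) = (if k = k1 then ckl n k l else 0)"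
proof -
  have P: "\<forall>i. 1 \<le> i \<and> i + l \<le> n \<longrightarrow> xs n l i * poly (fkl n k l) (alpha n (i+l)) = vv n k (k-l) i"
    using fkl_prop[OF n h(1) h(3)] by blast
  have P1: "\<forall>i. 1 \<le> i \<and> i + l \<le> n \<longrightarrow> xs n l i * poly (fkl n k1 l) (alpha n (i+l)) = vv n k1 (k1-l) i"
    using fkl_prop[OF n h(2) h(4)] by blast
  have "(\<Sum>i=1..n. poly (fkl n k l) (alpha n i) * poly (fkl n k1 l) (alpha n i)
              * (\<Prod>m=1..l. T n m (alpha n i)))
      = (\<Sum>b=1..n-l. poly (fkl n k l) (alpha n (b+l)) * poly (fkl n k1 l) (alpha n (b+l))
              * (\<Prod>m=1..l. T n m (alpha n (b+l))))"
    by (rule shift_sum) (metis wT0 mult_zero_right)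
  also have "\<dots> = ip n l (vv n k (k-l)) (vv n k1 (k1-l))"
    unfolding ip_def
  proof (rule sum.cong)
    fix b assume b: "b \<in> {1..n-l}"
    then have bl: "1 \<le> b" "b + l \<le> n" using h n by auto
    have nz: "xs n l b \<noteq> 0" using xs_nz bl by auto
    have w: "(\<Prod>m=1..l. T n m (alpha n (b+l))) = xs n l b" using wT[of l "b+l" n] bl by simp
    show "poly (fkl n k l) (alpha n (b+l)) * poly (fkl n k1 l) (alpha n (b+l)) * (\<Prod>m=1..l. T n m (alpha n (b+l)))
        = vv n k (k-l) b * vv n k1 (k1-l) b / xs n l b"
    proof -
      have e1: "vv n k (k-l) b = xs n l b * poly (fkl n k l) (alpha n (b+l))" using P bl by auto
      have e2: "vv n k1 (k1-l) b = xs n l b * poly (fkl n k1 l) (alpha n (b+l))" using P1 bl by auto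
      show ?thesis unfolding w e1 e2 using nz by (simp add: field_simps)
    qed
  qed simp
  also have "\<dots> = (if k = k1 then ckl n k l else 0)"
  proof (cases "k1 \<le> k")
    case True
    then show ?thesis using Gram[OF h(3) n h(2) True] ckl_eq[OF h(3) n h(1)] by auto
  next
    case False
    then show ?thesis using Gram[OF h(4) n h(1)] ip_sym by auto
  qed
  finally show ?thesis .
qed




lemma ckl_nz: assumes "k \<le> n - 1" "n \<ge> 1" shows "ckl n k l \<noteq> 0"
proof -
  have "\<forall>m\<in>{1..k}. (real n)^2 - (real m)^2 \<noteq> 0"
  proof
    fix m :: nat assume m: "m \<in> {1..k}"
    then have "m < n" using assms by auto
    then have "(real m)^2 < (real n)^2" by (simp add: power_strict_mono)
    then show "(real n)^2 - (real m)^2 \<noteq> 0" by linarith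
  qed
  then have "(\<Prod>m=1..k. (real n)^2 - (real m)^2) \<noteq> 0" by (subst prod_zero_iff) auto
  moreover have "(2 * real k + 1) \<noteq> 0" by (simp add: add_nonneg_eq_0_iff)
  ultimately show ?thesis using assms unfolding ckl_def by simp
qed

lemma sum_suc: "(\<Sum>b<N. g (Suc b)) = (\<Sum>b=1..N. (g b :: real))"
  by (induction N) auto

lemma sum_shift_l: fixes n l :: nat shows "n \<ge> 1 \<Longrightarrow> l \<le> n \<Longrightarrow> (\<Sum>k=l..n-1. G k) = (\<Sum>a<n-l. (G (a+l) :: real))"
proof -
  assume a: "n \<ge> 1" "l \<le> n"
  have "{l..n-1} = {0+l..<(n-l)+l}" using a by auto
  then have "(\<Sum>k=l..n-1. G k) = (\<Sum>a=0..<n-l. G (a+l))" by (simp only: sum.shift_bounds_nat_ivl)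
  then show ?thesis by (simp add: atLeast0LessThan)
qed

theorem proposition8p3p1:
  fixes n :: nat
  assumes "n \<ge> 1"
  shows "(\<forall>k k1 l. l \<le> k \<and> l \<le> k1 \<and> k \<le> n - 1 \<and> k1 \<le> n - 1 \<longrightarrow>
           (\<Sum>i=1..n. poly (fkl n k l) (alpha n i) * poly (fkl n k1 l) (alpha n i)
              * (\<Prod>m=1..l. T n m (alpha n i)))
           = (if k = k1 then ckl n k l else 0))
       \<and> (\<forall>l i j. l \<le> n - 1 \<and> i \<in> {l+1..n} \<and> j \<in> {l+1..n} \<longrightarrow>
           (\<Sum>k=l..n-1. (1 / ckl n k l) * poly (fkl n k l) (alpha n i) * poly (fkl n k l) (alpha n j)
              * (\<Prod>m=1..l. T n m (alpha n i)))
           = (if i = j then 1 else 0))"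
proof (intro conjI allI impI)
  fix k k1 l assume h: "l \<le> k \<and> l \<le> k1 \<and> k \<le> n - 1 \<and> k1 \<le> n - 1"
  show "(\<Sum>i=1..n. poly (fkl n k l) (alpha n i) * poly (fkl n k1 l) (alpha n i)
              * (\<Prod>m=1..l. T n m (alpha n i))) = (if k = k1 then ckl n k l else 0)"
    using part1[OF assms] h by blast
next
  fix l i j assume h: "l \<le> n - 1 \<and> i \<in> {l+1..n} \<and> j \<in> {l+1..n}"
  define N where "N = n - l"
  define F where "F a b = poly (fkl n (a+l) l) (alpha n (b+l+1))" for a b
  define w where "w b = (\<Prod>m=1..l. T n m (alpha n (b+l+1)))" for b
  define c where "c a = ckl n (a+l) l" for a
  have N1: "N \<ge> 1" using h assms unfolding N_def by linarith
  have cnz: "\<forall>a<N. c a \<noteq> 0"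
  proof (intro allI impI)
    fix a assume "a < N"
    then have "a + l \<le> n - 1" unfolding N_def by linarith
    then show "c a \<noteq> 0" unfolding c_def using ckl_nz assms by blast
  qed
  have wnz: "\<forall>b<N. w b \<noteq> 0"
  proof (intro allI impI)
    fix b assume b: "b < N"
    have "w b = xs n l (b+1)" unfolding w_def using wT[of l "b+l+1" n] by simp
    moreover have "xs n l (b+1) \<noteq> 0" using b unfolding N_def by (intro xs_nz) auto
    ultimately show "w b \<noteq> 0" by simp
  qed
  have orth: "\<forall>a<N. \<forall>a1<N. (\<Sum>b<N. F a b * F a1 b * w b) = (if a = a1 then c a else 0)"
  proof (intro allI impI)
    fix a a1 assume aa: "a < N" "a1 < N"
    define hh where "hh i = poly (fkl n (a+l) l) (alpha n i) * poly (fkl n (a1+l) l) (alpha n i) * (\<Prod>m=1..l. T n m (alpha n i))" for i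
    have "(\<Sum>b<N. F a b * F a1 b * w b) = (\<Sum>b<N. hh (Suc b + l))"
      unfolding F_def w_def hh_def by simp
    also have "\<dots> = (\<Sum>b=1..N. hh (b + l))" by (rule sum_suc)
    also have "\<dots> = (\<Sum>i=1..n. hh i)" unfolding N_def
      by (rule shift_sum[symmetric]) (metis hh_def wT0 mult_zero_right)
    also have "\<dots> = (if a + l = a1 + l then ckl n (a+l) l else 0)"
      unfolding hh_def using aa N_def by (intro part1[OF assms]) auto
    finally show "(\<Sum>b<N. F a b * F a1 b * w b) = (if a = a1 then c a else 0)" unfolding c_def by simp
  qed
  have D: "\<forall>i<N. \<forall>j<N. (\<Sum>k<N. (1 / c k) * F k i * F k j * w i) = (if i = j then 1 else 0)"
    by (rule dual[OF cnz wnz orth])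
  define i' where "i' = i - l - 1"
  define j' where "j' = j - l - 1"
  have ii: "i = i' + l + 1" "i' < N" and jj: "j = j' + l + 1" "j' < N"
    using h unfolding i'_def j'_def N_def by auto
  have "(\<Sum>k=l..n-1. (1 / ckl n k l) * poly (fkl n k l) (alpha n i) * poly (fkl n k l) (alpha n j)
              * (\<Prod>m=1..l. T n m (alpha n i)))
     = (\<Sum>a<N. (1 / c a) * F a i' * F a j' * w i')"
    unfolding N_def c_def F_def w_def using assms h ii jj
    by (subst sum_shift_l) auto
  also have "\<dots> = (if i' = j' then 1 else 0)" using D ii jj by blast
  also have "\<dots> = (if i = j then 1 else 0)" using ii jj by auto
  finally show "(\<Sum>k=l..n-1. (1 / ckl n k l) * poly (fkl n k l) (alpha n i) * poly (fkl n k l) (alpha n j)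
              * (\<Prod>m=1..l. T n m (alpha n i))) = (if i = j then 1 else 0)" .
qed


end
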